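(* Define Knuth's up-arrow operations on positive integers by $a\uparrow^1 b=a^b$, $a\uparrow^k 1=a$ and $a\uparrow^{k}(b+1)=a\uparrow^{k-1}(a\uparrow^{k}b)$ for $k\ge2$, $b\ge1$. Let $g_1=3\uparrow^4 3$ and $g_{i}=3\uparrow^{g_{i-1}}3$ for $i\ge2$. Then the sequence $(g_i)_{i\ge1}$ converges in the ring $\mathbb{Z}_{10}$ of $10$-adic integers, the sequence $(3\uparrow\uparrow j)_{j\ge1}$ (where $3\uparrow\uparrow j=3\uparrow^2 j$) also converges in $\mathbb{Z}_{10}$, and the two limits coincide: $\lim_{i\to\infty}g_i=\lim_{j\to\infty}3\uparrow\uparrow j$ in $\mathbb{Z}_{10}$.
   Context: $\mathbb{Z}_{10}=\varprojlim_m\mathbb{Z}/10^m\mathbb{Z}$ is the ring of $10$-adic integers; a sequence of integers converges in $\mathbb{Z}_{10}$ iff for every $m$ its last $m$ decimal digits are eventually constant. Graham's number is $G=g_{64}$. *)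

theory Defs
  imports Main
begin

text \<open>Knuth up-arrow a \<up>^k b for k \<ge> 1, b \<ge> 1. Values at k = 0 or b = 0
  are outside the domain of the paper's definition and are fixed by arbitrary
  conventions (never used in the statement).\<close>
fun uparrow :: "nat \<Rightarrow> nat \<Rightarrow> nat \<Rightarrow> nat" where
  "uparrow a 0 b = a * b"
| "uparrow a (Suc 0) b = a ^ b"
| "uparrow a (Suc (Suc k)) 0 = 1"
| "uparrow a (Suc (Suc k)) (Suc 0) = a"
| "uparrow a (Suc (Suc k)) (Suc (Suc b)) =
     uparrow a (Suc k) (uparrow a (Suc (Suc k)) (Suc b))"

text \<open>Graham's sequence: graham 1 = 3\<up>^4 3, graham (i+1) = 3 \<up>^(graham i) 3.
  (graham 0 is an unused convention, set to 4 so that graham 1 = 3\<up>^4 3.)\<close>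
fun graham :: "nat \<Rightarrow> nat" where
  "graham 0 = 4"
| "graham (Suc i) = uparrow 3 (graham i) 3"

text \<open>Elements of Z_10 = lim Z/10^m Z represented as coherent digit-residue
  sequences x :: nat \<Rightarrow> nat, x m = residue mod 10^m.\<close>
definition converges_10adic :: "(nat \<Rightarrow> nat) \<Rightarrow> bool" where
  "converges_10adic s \<longleftrightarrow>
     (\<forall>m. \<exists>N. \<forall>n\<ge>N. s n mod 10 ^ m = s N mod 10 ^ m)"

definition lim_10adic :: "(nat \<Rightarrow> nat) \<Rightarrow> nat \<Rightarrow> nat" where
  "lim_10adic s m =
     s (LEAST N. \<forall>n\<ge>N. s n mod 10 ^ m = s N mod 10 ^ m) mod 10 ^ m"

end

theory Submission
  imports Defs "HOL-Number_Theory.Cong"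
begin

definition tt :: "nat \<Rightarrow> nat" where "tt j = uparrow 3 2 (Suc j)"

lemma tt0: "tt 0 = 3" by (simp add: tt_def numeral_2_eq_2)
lemma ttS: "tt (Suc j) = 3 ^ tt j"
  by (simp add: tt_def numeral_2_eq_2)

lemma pow3_gt: "n < 3 ^ n"
  by (induction n) auto

lemma tt_ge: "tt j \<ge> j + 3"
proof (induction j)
  case 0 then show ?case by (simp add: tt0)
next
  case (Suc j)
  have "tt j < 3 ^ tt j" by (rule pow3_gt)
  then show ?case using Suc by (simp add: ttS)
qed

lemma tt_mono: "tt j \<le> tt (Suc j)"
  using pow3_gt[of "tt j"] by (simp add: ttS)

definition Q :: "nat \<Rightarrow> nat" where "Q m = 4 * 10 ^ m"

lemma pow10: "(1 + y::nat) ^ 10 = 1 + 10*y + y^2 * (45+120*y+210*y^2+252*y^3+210*y^4+120*y^5+45*y^6+10*y^7+y^8)"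
  by algebra

lemma three_Q: "\<exists>t. (3::nat) ^ Q m = 1 + Q (Suc m) * t"
proof (induction m)
  case 0 then show ?case by (rule exI[of _ 2]) (simp add: Q_def)
next
  case (Suc m)
  then obtain t where t: "3 ^ Q m = 1 + Q (Suc m) * t" by blast
  define P where "P = (45+120*(Q (Suc m)*t)+210*(Q (Suc m)*t)^2+252*(Q (Suc m)*t)^3+210*(Q (Suc m)*t)^4+120*(Q (Suc m)*t)^5+45*(Q (Suc m)*t)^6+10*(Q (Suc m)*t)^7+(Q (Suc m)*t)^8)"
  have "(3::nat) ^ Q (Suc m) = (3 ^ Q m) ^ 10"
  proof -
    have "Q (Suc m) = Q m * 10" by (simp add: Q_def)
    then show ?thesis by (simp only: power_mult)
  qed
  also have "\<dots> = 1 + 10 * (Q (Suc m)*t) + (Q (Suc m)*t)^2 * P"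
    unfolding t P_def by (rule pow10)
  also have "\<dots> = 1 + Q (Suc (Suc m)) * (t + 4 * 10^m * t^2 * P)"
  proof -
    have gen: "\<And>A B t P::nat. A = 10 * B \<Longrightarrow> 1 + 10 * (A*t) + (A*t)^2 * P = 1 + (10*A) * (t + B * t^2 * P)"
      by (simp add: power2_eq_square algebra_simps)
    have "Q (Suc m) = 10 * (4 * 10^m)" "Q (Suc (Suc m)) = 10 * Q (Suc m)" by (simp_all add: Q_def)
    then show ?thesis using gen[of "Q (Suc m)" "4*10^m" t P] by (simp only:)
  qed
  finally show ?case by blast
qed

lemma cong_one_gen: "[1 + (q::nat)*t = 1] (mod q)"
  unfolding cong_def by (metis mod_mult_self2)

lemma three_Q_cong: "[(3::nat) ^ Q m = 1] (mod Q (Suc m))"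
proof -
  obtain t where t: "3 ^ Q m = 1 + Q (Suc m) * t" using three_Q by blast
  show ?thesis unfolding t by (rule cong_one_gen)
qed

lemma odd_tt: "odd (tt j)"
  by (cases j) (auto simp: tt0 ttS)

lemma pow3_mod4: "odd n \<Longrightarrow> 3 ^ n mod 4 = (3::nat)"
proof -
  assume "odd n"
  then obtain k where n: "n = 2*k+1" by (metis oddE)
  have "[9 ^ k = 1 ^ k] (mod (4::nat))" by (rule cong_pow) (simp add: cong_def)
  then have "[3 * 9 ^ k = 3 * 1] (mod (4::nat))" by (metis cong_scalar_left power_one)
  then show ?thesis by (simp add: n power_mult cong_def)
qed

lemma tt_mod4: "tt j mod 4 = 3"
  by (cases j) (auto simp: tt0 ttS pow3_mod4 odd_tt)

lemma claimC: "\<forall>j\<ge>m. [tt (Suc j) = tt j] (mod Q m)"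
proof (induction m)
  case 0
  show ?case using tt_mod4 by (simp add: Q_def cong_def)
next
  case (Suc m)
  show ?case
  proof (intro allI impI)
    fix j assume j: "Suc m \<le> j"
    then obtain j' where jj: "j = Suc j'" and "j' \<ge> m" by (cases j) auto
    then have c: "[tt (Suc j') = tt j'] (mod Q m)" using Suc by blast
    have "Q m dvd tt (Suc j') - tt j'" using c tt_mono[of j'] by (simp add: cong_altdef_nat)
    then obtain k where k: "tt (Suc j') = tt j' + Q m * k"
      using tt_mono[of j'] by (metis dvd_def le_add_diff_inverse)
    have "[(3 ^ Q m) ^ k = 1 ^ k] (mod Q (Suc m))" by (rule cong_pow) (rule three_Q_cong)
    then have "[(3 ^ Q m) ^ k = 1] (mod Q (Suc m))" by (simp only: power_one)
    then have "[3 ^ tt j' * (3 ^ Q m) ^ k = 3 ^ tt j' * 1] (mod Q (Suc m))"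
      by (rule cong_scalar_left)
    then have "[3 ^ tt (Suc j') = 3 ^ tt j'] (mod Q (Suc m))"
      by (simp add: k power_add power_mult)
    then show "[tt (Suc j) = tt j] (mod Q (Suc m))" by (simp add: jj ttS)
  qed
qed

lemma stable_Q: "j \<ge> m \<Longrightarrow> [tt j = tt m] (mod Q m)"
proof (induction j rule: dec_induct)
  case base then show ?case by simp
next
  case (step j)
  then show ?case using claimC[of m] cong_trans by blast
qed

lemma stable: "j \<ge> m \<Longrightarrow> tt j mod 10 ^ m = tt m mod 10 ^ m"
proof -
  assume "j \<ge> m"
  then have "[tt j = tt m] (mod Q m)" by (rule stable_Q)
  moreover have "10 ^ m dvd Q m" by (simp add: Q_def)
  ultimately show ?thesis using cong_dvd_modulus_nat unfolding cong_def by blast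
qed

lemma up_step: "uparrow 3 (Suc (Suc k)) (Suc c + 2) = uparrow 3 (Suc k) (uparrow 3 (Suc (Suc k)) (c+2))"
proof -
  have "Suc c + 2 = Suc (Suc (Suc c))" by simp
  moreover have "c + 2 = Suc (Suc c)" by simp
  ultimately show ?thesis by (simp only: uparrow.simps(5))
qed

lemma up_two: "uparrow 3 (Suc (Suc (Suc k))) (0+2) = uparrow 3 (Suc (Suc k)) 3"
proof -
  have a: "(0::nat)+2 = Suc (Suc 0)" by simp
  have b: "(3::nat) = uparrow 3 (Suc (Suc (Suc k))) (Suc 0)" by (simp only: uparrow.simps(4))
  show ?thesis by (simp only: a uparrow.simps(5) uparrow.simps(4))
qed

lemma up_base: "uparrow 3 (Suc (Suc 0)) (Suc c) = tt c"
  unfolding tt_def numeral_2_eq_2 by (rule refl)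

lemma up_tt: "\<forall>b\<ge>2. \<exists>h. uparrow 3 (Suc (Suc k)) b = tt h \<and> h + 3 \<ge> Suc (Suc k) + b"
proof (induction k)
  case 0
  show ?case
  proof (intro allI impI)
    fix b :: nat assume b2: "b \<ge> 2"
    then obtain c where bc: "b = Suc c" by (cases b) auto
    have "uparrow 3 (Suc (Suc 0)) b = tt c" unfolding bc by (rule up_base)
    moreover have "c + 3 \<ge> Suc (Suc 0) + b" using bc by linarith
    ultimately show "\<exists>h. uparrow 3 (Suc (Suc 0)) b = tt h \<and> h + 3 \<ge> Suc (Suc 0) + b"
      by blast
  qed
next
  case (Suc k)
  note outer = Suc.IH
  have "\<exists>h. uparrow 3 (Suc (Suc (Suc k))) (c+2) = tt h \<and> h + 3 \<ge> Suc (Suc (Suc k)) + (c+2)" for c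
  proof (induction c)
    case 0
    have "(3::nat) \<ge> 2" by simp
    then obtain h where h: "uparrow 3 (Suc (Suc k)) 3 = tt h" "h + 3 \<ge> Suc (Suc k) + 3"
      using outer by blast
    have "uparrow 3 (Suc (Suc (Suc k))) (0+2) = tt h" using up_two[of k] h(1) by (rule trans)
    moreover have "h + 3 \<ge> Suc (Suc (Suc k)) + (0+2)" using h(2) by linarith
    ultimately show ?case by blast
  next
    case (Suc c)
    then obtain h where h: "uparrow 3 (Suc (Suc (Suc k))) (c+2) = tt h"
      "h + 3 \<ge> Suc (Suc (Suc k)) + (c+2)" by blast
    have "tt h \<ge> 2" using tt_ge[of h] by linarith
    then obtain h' where h': "uparrow 3 (Suc (Suc k)) (tt h) = tt h'" "h' + 3 \<ge> Suc (Suc k) + tt h"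
      using outer by blast
    have "uparrow 3 (Suc (Suc (Suc k))) (Suc c + 2) = tt h'"
      by (simp only: up_step h(1) h'(1))
    moreover have "h' + 3 \<ge> Suc (Suc (Suc k)) + (Suc c+2)" using h h' tt_ge[of h] by linarith
    ultimately show ?case by blast
  qed
  then show ?case by (metis le_add_diff_inverse2)
qed

lemma ge2_Suc: "(x::nat) \<ge> 2 \<Longrightarrow> \<exists>k. x = Suc (Suc k)"
  by (cases x; cases "x - 1") auto

lemma graham_step: "graham (Suc (Suc i)) = uparrow 3 (graham (Suc i)) 3"
  by (rule graham.simps(2))

lemma graham_tt_step:
  assumes h: "G = tt h" "h \<ge> i"
  shows "\<exists>h'. uparrow 3 G 3 = tt h' \<and> h' \<ge> Suc i"
proof -
  have "G \<ge> 2" using tt_ge[of h] h(1) by linarith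
  then obtain k where k: "G = Suc (Suc k)" using ge2_Suc by blast
  have "(3::nat) \<ge> 2" by simp
  then obtain h' where h': "uparrow 3 (Suc (Suc k)) 3 = tt h'" "h' + 3 \<ge> Suc (Suc k) + 3"
    using up_tt[of k] by blast
  have "h' \<ge> Suc i" using h' k h tt_ge[of h] by linarith
  then show ?thesis using h'(1) k by blast
qed

lemma graham_tt: "\<exists>h. graham (Suc i) = tt h \<and> h \<ge> i"
proof (induction i)
  case 0
  have g0: "graham 0 = Suc (Suc 2)"
  proof -
    have "graham 0 = 4" by (rule graham.simps(1))
    then show ?thesis by simp
  qed
  have e: "graham (Suc 0) = uparrow 3 (Suc (Suc 2)) 3"
    by (simp only: graham.simps(2) g0)
  have "(3::nat) \<ge> 2" by simp
  then obtain h where hh: "uparrow 3 (Suc (Suc 2)) 3 = tt h"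
    using up_tt[of 2] by blast
  have "graham (Suc 0) = tt h" using e hh by (rule trans)
  then show ?case by (intro exI[of _ h] conjI) (assumption, rule le0)
next
  case (Suc i)
  then obtain h where h: "graham (Suc i) = tt h" "h \<ge> i" by blast
  obtain h' where "uparrow 3 (graham (Suc i)) 3 = tt h'" "h' \<ge> Suc i"
    using graham_tt_step[OF h] by blast
  then show ?case unfolding graham_step by blast
qed

lemma lim_eq: "(\<forall>n\<ge>N0. s n mod 10 ^ m = c) \<Longrightarrow> lim_10adic s m = c"
proof -
  assume H: "\<forall>n\<ge>N0. s n mod 10 ^ m = c"
  define P where "P = (\<lambda>N. \<forall>n\<ge>N. s n mod 10 ^ m = s N mod 10 ^ m)"
  have "P N0" unfolding P_def using H by simp
  then have L: "P (Least P)" by (rule LeastI)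
  define M where "M = max (Least P) N0"
  have a: "s M mod 10^m = s (Least P) mod 10^m"
  proof -
    have "\<forall>n\<ge>Least P. s n mod 10 ^ m = s (Least P) mod 10 ^ m" using L unfolding P_def by blast
    moreover have "M \<ge> Least P" unfolding M_def by simp
    ultimately show ?thesis by blast
  qed
  have b: "s M mod 10^m = c"
  proof -
    have "M \<ge> N0" unfolding M_def by simp
    then show ?thesis using H by blast
  qed
  have "lim_10adic s m = s (Least P) mod 10^m" unfolding lim_10adic_def P_def by (rule refl)
  also have "\<dots> = c" using a b by (simp only:)
  finally show ?thesis .
qed

lemma g_stable: "n \<ge> m \<Longrightarrow> graham (Suc n) mod 10 ^ m = tt m mod 10 ^ m"
proof -
  assume "n \<ge> m"
  obtain h where "graham (Suc n) = tt h" "h \<ge> n" using graham_tt by blast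
  then have "h \<ge> m" "graham (Suc n) = tt h" using \<open>n \<ge> m\<close> by linarith+
  then show ?thesis using stable[of m h] by (simp only:)
qed

theorem mainTheorem5:
  shows "converges_10adic (\<lambda>i. graham (Suc i))
       \<and> converges_10adic (\<lambda>j. uparrow 3 2 (Suc j))
       \<and> lim_10adic (\<lambda>i. graham (Suc i)) = lim_10adic (\<lambda>j. uparrow 3 2 (Suc j))"
proof (intro conjI)
  show "converges_10adic (\<lambda>i. graham (Suc i))"
    unfolding converges_10adic_def
  proof
    fix m
    have "\<forall>n\<ge>m. graham (Suc n) mod 10 ^ m = graham (Suc m) mod 10 ^ m"
      using g_stable[of m] g_stable[of m m] by simp
    then show "\<exists>N. \<forall>n\<ge>N. graham (Suc n) mod 10 ^ m = graham (Suc N) mod 10 ^ m" by blast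
  qed
  show "converges_10adic (\<lambda>j. uparrow 3 2 (Suc j))"
    unfolding converges_10adic_def tt_def[symmetric]
  proof
    fix m
    have "\<forall>n\<ge>m. tt n mod 10 ^ m = tt m mod 10 ^ m" using stable by blast
    then show "\<exists>N. \<forall>n\<ge>N. tt n mod 10 ^ m = tt N mod 10 ^ m" by blast
  qed
  show "lim_10adic (\<lambda>i. graham (Suc i)) = lim_10adic (\<lambda>j. uparrow 3 2 (Suc j))"
  proof
    fix m
    have "lim_10adic (\<lambda>i. graham (Suc i)) m = tt m mod 10 ^ m"
      by (rule lim_eq[of m]) (blast intro: g_stable)
    moreover have "lim_10adic (\<lambda>j. uparrow 3 2 (Suc j)) m = tt m mod 10 ^ m"
      unfolding tt_def[symmetric] by (rule lim_eq[of m]) (blast intro: stable)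
    ultimately show "lim_10adic (\<lambda>i. graham (Suc i)) m = lim_10adic (\<lambda>j. uparrow 3 2 (Suc j)) m"
      by (rule trans[OF _ sym])
  qed
qed

end
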